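(* Let $d\ge 2$, $m\ge 1$, and let the ancillae $A_1,\dots,A_{m}$ consecutively measure a prepared quantum system $Q$, so that the joint pure state of $Q A_1\cdots A_m$ is $$|\Psi\rangle=\sum_{x_1,\dots,x_m}\alpha^{(1)}_{x_1}U^{(2)}_{x_1x_2}\cdots U^{(m)}_{x_{m-1}x_m}\,|\widetilde{x}_m\rangle_Q|x_1\rangle_{A_1}\cdots|x_m\rangle_{A_m}.$$ Then the reduced density matrix $\rho(A_1\cdots A_m)=\mathrm{Tr}_Q|\Psi\rangle\langle\Psi|$ is a classical-quantum state of the form $$\rho(A_1\cdots A_m)=\sum_{x_m}q^{(m)}_{x_m}\,|\psi_{x_m}\rangle\langle\psi_{x_m}|\otimes|x_m\rangle\langle x_m|,$$ where $q^{(m)}$ is the probability distribution of outcomes of $A_m$ and each $|\psi_{x_m}\rangle$ is a normalized pure state of $A_1\cdots A_{m-1}$, and its joint entropy is contained only in the last device: $$S(A_1\cdots A_m)=S(A_m).$$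
   Context: $Q$ is a $d$-dimensional quantum system initially in the pure state $|Q\rangle=\sum_{x_1=1}^d\alpha^{(1)}_{x_1}|\widetilde{x}_1\rangle$ ("prepared" state). For each $i$ an orthonormal basis $\{|\widetilde{x}_i\rangle\}_{x_i=1}^d$ of $Q$ is the basis measured by ancilla $A_i$, and $U^{(i)}_{x_{i-1}x_i}=\langle\widetilde{x}_i|\widetilde{x}_{i-1}\rangle$ ($i\ge2$) are the entries of a unitary $d\times d$ matrix. Each ancilla $A_i$ is a $d$-dimensional system with orthonormal basis $\{|x\rangle\}_{x=1}^d$, starting in a fixed state $|0\rangle$; the measurement by $A_i$ is the unitary $U_{QA_i}=\sum_{x}|\widetilde{x}_i\rangle\langle\widetilde{x}_i|\otimes U_x$ with $U_x|0\rangle=|x\rangle$, applied in the order $A_1,A_2,\dots$; this yields the displayed state $|\Psi\rangle$. The outcome distribution of $A_m$ is $q^{(m)}_{x_m}=\sum_{x_1,\dots,x_{m-1}}|\alpha^{(1)}_{x_1}|^2|U^{(2)}_{x_1x_2}|^2\cdots|U^{(m)}_{x_{m-1}x_m}|^2$. $S(X)=-\mathrm{Tr}\,\rho(X)\log_d\rho(X)$ denotes the von Neumann entropy (logarithm base $d$) of the reduced state of subsystem $X$. *)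

theory Defs
  imports Complex_Main "Jordan_Normal_Form.Char_Poly"
begin

text \<open>Computational basis indices run over 0..d-1. A composite system of n
subsystems of dimension d is indexed by 0..d^n-1; subsystem p (0-based, p = 0 is
the leftmost tensor factor) carries the p-th most significant base-d digit.\<close>

definition dig :: "nat \<Rightarrow> nat \<Rightarrow> nat \<Rightarrow> nat \<Rightarrow> nat" where
  "dig d n p a = a div d ^ (n - 1 - p) mod d"

definition digs :: "nat \<Rightarrow> nat \<Rightarrow> nat \<Rightarrow> nat list" where
  "digs d n a = map (\<lambda>p. dig d n p a) [0..<n]"

definition unitary_fn :: "nat \<Rightarrow> (nat \<Rightarrow> nat \<Rightarrow> complex) \<Rightarrow> bool" where
  "unitary_fn d V \<longleftrightarrow>
     (\<forall>a<d. \<forall>b<d. (\<Sum>k<d. V a k * cnj (V b k)) = (if a = b then 1 else 0)) \<and>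
     (\<forall>a<d. \<forall>b<d. (\<Sum>k<d. cnj (V k a) * V k b) = (if a = b then 1 else 0))"

text \<open>Amplitude alpha_{x1} U^(2)_{x1 x2} ... U^(m)_{x(m-1) xm}; xs = [x1,...,xm].\<close>
definition amp :: "(nat \<Rightarrow> complex) \<Rightarrow> (nat \<Rightarrow> nat \<Rightarrow> nat \<Rightarrow> complex) \<Rightarrow> nat list \<Rightarrow> complex" where
  "amp \<alpha> U xs = \<alpha> (xs ! 0) * (\<Prod>i\<in>{2..length xs}. U i (xs ! (i - 2)) (xs ! (i - 1)))"

text \<open>The joint state |Psi> of Q A_1 ... A_m (Q = subsystem 0, expressed in the basis
|x~_m>, A_i = subsystem i).\<close>
definition psi :: "nat \<Rightarrow> nat \<Rightarrow> (nat \<Rightarrow> complex) \<Rightarrow> (nat \<Rightarrow> nat \<Rightarrow> nat \<Rightarrow> complex) \<Rightarrow> complex vec" where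
  "psi d m \<alpha> U = vec (d ^ Suc m)
     (\<lambda>a. let ys = digs d (Suc m) a in if ys ! 0 = ys ! m then amp \<alpha> U (tl ys) else 0)"

definition proj :: "complex vec \<Rightarrow> complex mat" where
  "proj v = mat (dim_vec v) (dim_vec v) (\<lambda>(i, j). v $ i * cnj (v $ j))"

definition kron :: "complex mat \<Rightarrow> complex mat \<Rightarrow> complex mat" where
  "kron A B = mat (dim_row A * dim_row B) (dim_col A * dim_col B)
     (\<lambda>(i, j). A $$ (i div dim_row B, j div dim_col B) * B $$ (i mod dim_row B, j mod dim_col B))"

text \<open>Reduced state (partial trace) of a state rho of n subsystems of dimension d,
keeping the subsystems listed (in increasing order) in keep.\<close>
definition reduced :: "nat \<Rightarrow> nat \<Rightarrow> nat list \<Rightarrow> complex mat \<Rightarrow> complex mat" where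
  "reduced d n keep \<rho> = mat (d ^ length keep) (d ^ length keep) (\<lambda>(i, j).
     \<Sum>a<d ^ n. \<Sum>b<d ^ n.
       if digs d (length keep) i = map (\<lambda>p. dig d n p a) keep \<and>
          digs d (length keep) j = map (\<lambda>p. dig d n p b) keep \<and>
          (\<forall>p<n. p \<notin> set keep \<longrightarrow> dig d n p a = dig d n p b)
       then \<rho> $$ (a, b) else 0)"

text \<open>Von Neumann entropy with logarithm base d: Shannon entropy of the eigenvalues
(roots of the characteristic polynomial, counted with algebraic multiplicity).\<close>
definition eta :: "nat \<Rightarrow> real \<Rightarrow> real" where
  "eta d t = (if t \<le> 0 then 0 else t * log (real d) t)"

definition vn_entropy :: "nat \<Rightarrow> complex mat \<Rightarrow> real" where
  "vn_entropy d \<rho> = - (\<Sum>e\<in>{e. poly (char_poly \<rho>) e = 0}.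
      real (order e (char_poly \<rho>)) * eta d (Re e))"

definition qdist :: "nat \<Rightarrow> nat \<Rightarrow> (nat \<Rightarrow> complex) \<Rightarrow> (nat \<Rightarrow> nat \<Rightarrow> nat \<Rightarrow> complex) \<Rightarrow> nat \<Rightarrow> real" where
  "qdist d m \<alpha> U x = (\<Sum>xs\<in>{xs. length xs = m - 1 \<and> set xs \<subseteq> {..<d}}.
     let ys = xs @ [x] in
       (cmod (\<alpha> (ys ! 0)))\<^sup>2 * (\<Prod>i\<in>{2..m}. (cmod (U i (ys ! (i - 2)) (ys ! (i - 1))))\<^sup>2))"

end

theory Submission
  imports Defs
begin


lemma digs_len[simp]: "length (digs d n a) = n" by (simp add: digs_def)
lemma digs_nth[simp]: "p < n \<Longrightarrow> digs d n a ! p = dig d n p a" by (simp add: digs_def)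

lemma digs_snoc: assumes "d > 0" shows "digs d (Suc n) a = digs d n (a div d) @ [a mod d]"
proof (rule nth_equalityI)
  fix p assume "p < length (digs d (Suc n) a)"
  then have p: "p < Suc n" by simp
  show "digs d (Suc n) a ! p = (digs d n (a div d) @ [a mod d]) ! p"
  proof (cases "p < n")
    case True
    have e: "n - p = Suc (n - 1 - p)" using True by simp
    have "a div d ^ (n - p) = a div d div d ^ (n - 1 - p)"
      unfolding e by (simp add: div_mult2_eq)
    then show ?thesis using True p by (simp add: nth_append dig_def)
  next
    case False
    then have "p = n" using p by simp
    then show ?thesis by (simp add: nth_append dig_def)
  qed
qed simp

lemma mod_div_gen: fixes a b c :: nat assumes "b > 0" shows "(a mod (b * c)) div b = a div b mod c"
  by (simp add: mod_mult2_eq assms)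

lemma mod_div_dig: fixes a d :: nat assumes "k < n" "d > 0" shows "(a mod d ^ n) div d ^ k mod d = a div d ^ k mod d"
proof -
  have nn: "n = k + Suc (n - k - 1)" using assms by simp
  have e: "d ^ n = d ^ k * (d * d ^ (n - k - 1))"
    by (subst nn) (simp only: power_add power_Suc)
  have "(a mod d ^ n) div d ^ k = a div d ^ k mod (d * d ^ (n - k - 1))"
    unfolding e by (rule mod_div_gen) (simp add: assms)
  then show ?thesis by (simp add: mod_mult2_eq)
qed

lemma digs_cons: assumes "d > 0" "a < d ^ Suc n"
  shows "digs d (Suc n) a = (a div d ^ n) # digs d n (a mod d ^ n)"
proof (rule nth_equalityI)
  fix p assume "p < length (digs d (Suc n) a)"
  then have p: "p < Suc n" by simp
  show "digs d (Suc n) a ! p = ((a div d ^ n) # digs d n (a mod d ^ n)) ! p"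
  proof (cases p)
    case 0
    have "a div d ^ n < d" using assms by (simp add: div_less_iff_less_mult mult.commute)
    then show ?thesis using 0 by (simp add: dig_def)
  next
    case (Suc q)
    then have "q < n" using p by simp
    then show ?thesis using Suc assms(1) by (simp add: dig_def mod_div_dig)
  qed
qed simp

lemma digs_set: "d > 0 \<Longrightarrow> set (digs d n a) \<subseteq> {..<d}"
  by (auto simp: digs_def dig_def)

lemma digs_inj: assumes "d > 0" shows "a < d ^ n \<Longrightarrow> b < d ^ n \<Longrightarrow> digs d n a = digs d n b \<Longrightarrow> a = b"
proof (induction n arbitrary: a b)
  case 0 then show ?case by simp
next
  case (Suc n)
  from Suc.prems(3) have "digs d n (a div d) = digs d n (b div d)" "a mod d = b mod d"
    unfolding digs_snoc[OF assms] by auto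
  moreover have "a div d < d ^ n" "b div d < d ^ n" using Suc.prems assms
    by (auto simp: div_less_iff_less_mult mult.commute)
  ultimately have "a div d = b div d" "a mod d = b mod d" using Suc.IH by auto
  then show ?case by (metis div_mult_mod_eq)
qed

lemma digs_bij: assumes "d > 0"
  shows "bij_betw (digs d n) {..<d ^ n} {xs. length xs = n \<and> set xs \<subseteq> {..<d}}"
proof -
  have inj: "inj_on (digs d n) {..<d ^ n}" by (rule inj_onI) (use digs_inj[OF assms] in auto)
  have sub: "digs d n ` {..<d ^ n} \<subseteq> {xs. length xs = n \<and> set xs \<subseteq> {..<d}}"
    using digs_set[OF assms] by auto
  have c: "card {xs. length xs = n \<and> set xs \<subseteq> {..<d}} = d ^ n"
    using card_lists_length_eq[of "{..<d}" n] by (simp add: conj_commute)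
  have fin: "finite {xs. length xs = n \<and> set xs \<subseteq> {..<d}}"
    using finite_lists_length_eq[of "{..<d}" n] by (simp add: conj_commute)
  have "digs d n ` {..<d ^ n} = {xs. length xs = n \<and> set xs \<subseteq> {..<d}}"
    by (rule card_subset_eq[OF fin sub]) (simp add: card_image[OF inj] c)
  then show ?thesis using inj by (simp add: bij_betw_def)
qed

lemma sum_split_mult: fixes f :: "nat \<Rightarrow> 'a::comm_monoid_add"
  shows "(\<Sum>a<m * n. f a) = (\<Sum>q<m. \<Sum>r<n. f (q * n + r))"
proof (induction m)
  case 0 then show ?case by simp
next
  case (Suc m)
  have "{..<Suc m * n} = {..<m * n} \<union> {m * n..<m * n + n}" by auto
  then have "(\<Sum>a<Suc m * n. f a) = (\<Sum>a<m * n. f a) + (\<Sum>a\<in>{m * n..<m * n + n}. f a)"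
    by (simp add: sum.union_disjoint ivl_disj_int)
  also have "(\<Sum>a\<in>{m * n..<m * n + n}. f a) = (\<Sum>r<n. f (m * n + r))"
    using sum.shift_bounds_nat_ivl[of f 0 "m*n" n] by (simp add: atLeast0LessThan add.commute)
  finally show ?case using Suc by simp
qed



definition phi :: "nat \<Rightarrow> nat \<Rightarrow> (nat \<Rightarrow> complex) \<Rightarrow> (nat \<Rightarrow> nat \<Rightarrow> nat \<Rightarrow> complex) \<Rightarrow> nat \<Rightarrow> nat \<Rightarrow> complex" where
  "phi d m \<alpha> U x k = amp \<alpha> U (digs d (m - 1) k @ [x])"

lemma psi_idx: assumes "d > 0" "m \<ge> 1" "a < d ^ Suc m"
  shows "psi d m \<alpha> U $ a = (if a div d ^ m = (a mod d ^ m) mod d then amp \<alpha> U (digs d m (a mod d ^ m)) else 0)"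
proof -
  have e: "digs d (Suc m) a = (a div d ^ m) # digs d m (a mod d ^ m)" by (rule digs_cons[OF assms(1,3)])
  have "digs d m (a mod d ^ m) ! (m - 1) = (a mod d ^ m) mod d"
    using assms by (simp add: dig_def)
  then have em: "dig d (Suc m) m a = (a mod d ^ m) mod d"
    using arg_cong[OF e, of "\<lambda>l. l ! m"] assms(2) by (cases m) auto
  have e0: "dig d (Suc m) 0 a = a div d ^ m"
    using arg_cong[OF e, of "\<lambda>l. l ! 0"] by simp
  show ?thesis using assms(3) unfolding psi_def by (simp add: e Let_def e0 em)
qed

lemma amp_digs: assumes "d > 0" "m \<ge> 1"
  shows "amp \<alpha> U (digs d m r) = phi d m \<alpha> U (r mod d) (r div d)"
proof -
  have "m = Suc (m - 1)" using assms by simp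
  then have "digs d m r = digs d (m - 1) (r div d) @ [r mod d]"
    by (metis digs_snoc[OF assms(1)])
  then show ?thesis by (simp add: phi_def)
qed

lemma qdist_eq: assumes "d > 0" "m \<ge> 1"
  shows "qdist d m \<alpha> U x = (\<Sum>k<d ^ (m - 1). (cmod (phi d m \<alpha> U x k))\<^sup>2)"
proof -
  have "qdist d m \<alpha> U x = (\<Sum>xs\<in>{xs. length xs = m - 1 \<and> set xs \<subseteq> {..<d}}. (cmod (amp \<alpha> U (xs @ [x])))\<^sup>2)"
    unfolding qdist_def
  proof (rule sum.cong[OF refl])
    fix xs assume "xs \<in> {xs. length xs = m - 1 \<and> set xs \<subseteq> {..<d}}"
    then have l: "length (xs @ [x]) = m" using assms by auto
    show "(let ys = xs @ [x] in (cmod (\<alpha> (ys ! 0)))\<^sup>2 * (\<Prod>i\<in>{2..m}. (cmod (U i (ys ! (i - 2)) (ys ! (i - 1))))\<^sup>2))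
        = (cmod (amp \<alpha> U (xs @ [x])))\<^sup>2"
      unfolding amp_def l Let_def
      by (simp add: norm_mult prod_norm[symmetric] power_mult_distrib prod_power_distrib)
  qed
  also have "\<dots> = (\<Sum>k<d ^ (m - 1). (cmod (amp \<alpha> U (digs d (m - 1) k @ [x])))\<^sup>2)"
    by (rule sum.reindex_bij_betw[OF digs_bij[OF assms(1)], symmetric])
  finally show ?thesis by (simp add: phi_def)
qed



lemma proj_idx: "a < dim_vec v \<Longrightarrow> b < dim_vec v \<Longrightarrow> proj v $$ (a, b) = v $ a * cnj (v $ b)"
  by (simp add: proj_def)

lemma dim_psi[simp]: "dim_vec (psi d m \<alpha> U) = d ^ Suc m" by (simp add: psi_def)

lemma lt_pow_suc: fixes q r d m :: nat assumes "q < d" "r < d ^ m" shows "q * d ^ m + r < d ^ Suc m"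
proof -
  have "q * d ^ m + r < q * d ^ m + d ^ m" using assms by simp
  also have "\<dots> = Suc q * d ^ m" by simp
  also have "\<dots> \<le> d * d ^ m" using assms(1) by (intro mult_right_mono) auto
  finally show ?thesis by simp
qed

lemma dd: "a0 < (N::nat) \<Longrightarrow> b0 < (M::nat) \<Longrightarrow> (\<Sum>a<N. \<Sum>b<M. if a = a0 then if b = b0 then c else 0 else 0) = (c::'a::comm_monoid_add)"
proof -
  assume h: "a0 < N" "b0 < M"
  have "(\<Sum>b<M. if a = a0 then if b = b0 then c else 0 else 0) = (if a = a0 then c else 0)" for a
    using h by (cases "a = a0") (simp_all add: sum.delta)
  then show ?thesis using h by (simp add: sum.delta)
qed

lemma red1: assumes d: "d > 0" and m: "m \<ge> 1" and i: "i < d ^ m" and j: "j < d ^ m"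
  shows "reduced d (Suc m) [1..<Suc m] (proj (psi d m \<alpha> U)) $$ (i, j) =
    (if i mod d = j mod d then phi d m \<alpha> U (i mod d) (i div d) * cnj (phi d m \<alpha> U (j mod d) (j div d)) else 0)"
proof -
  let ?P = "proj (psi d m \<alpha> U)"
  let ?s = "psi d m \<alpha> U"
  define a0 where "a0 = (i mod d) * d ^ m + i"
  define b0 where "b0 = (j mod d) * d ^ m + j"
  have a0: "a0 < d ^ Suc m" unfolding a0_def using i d by (intro lt_pow_suc) auto
  have b0: "b0 < d ^ Suc m" unfolding b0_def using j d by (intro lt_pow_suc) auto
  have a0d: "a0 div d ^ m = i mod d" "a0 mod d ^ m = i" unfolding a0_def using i d by auto
  have b0d: "b0 div d ^ m = j mod d" "b0 mod d ^ m = j" unfolding b0_def using j d by auto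
  have C1: "(digs d m k = map (\<lambda>p. dig d (Suc m) p a) [1..<Suc m]) = (a mod d ^ m = k)"
    if "a < d ^ Suc m" "k < d ^ m" for a k
  proof -
    have "map (\<lambda>p. dig d (Suc m) p a) [1..<Suc m] = tl (digs d (Suc m) a)"
      unfolding digs_def by (simp add: upt_conv_Cons del: upt_Suc)
    also have "\<dots> = digs d m (a mod d ^ m)" using digs_cons[OF d that(1)] by simp
    finally show ?thesis using digs_inj[OF d, of k m "a mod d ^ m"] that d by auto
  qed
  have C3: "(\<forall>p<Suc m. p \<notin> set [1..<Suc m] \<longrightarrow> dig d (Suc m) p a = dig d (Suc m) p b)
      = (a div d ^ m = b div d ^ m)" if "a < d ^ Suc m" "b < d ^ Suc m" for a b
  proof -
    have "a div d ^ m < d" "b div d ^ m < d" using that d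
      by (auto simp: div_less_iff_less_mult mult.commute)
    moreover have "(\<forall>p<Suc m. p \<notin> set [1..<Suc m] \<longrightarrow> dig d (Suc m) p a = dig d (Suc m) p b)
      = (dig d (Suc m) 0 a = dig d (Suc m) 0 b)"
    proof
      assume "\<forall>p<Suc m. p \<notin> set [1..<Suc m] \<longrightarrow> dig d (Suc m) p a = dig d (Suc m) p b"
      then show "dig d (Suc m) 0 a = dig d (Suc m) 0 b" by simp
    next
      assume h: "dig d (Suc m) 0 a = dig d (Suc m) 0 b"
      show "\<forall>p<Suc m. p \<notin> set [1..<Suc m] \<longrightarrow> dig d (Suc m) p a = dig d (Suc m) p b"
      proof (intro allI impI)
        fix p assume "p < Suc m" "p \<notin> set [1..<Suc m]"
        then have "p = 0" by auto
        then show "dig d (Suc m) p a = dig d (Suc m) p b" using h by simp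
      qed
    qed
    ultimately show ?thesis by (simp add: dig_def)
  qed
  have termeq: "(if digs d m i = map (\<lambda>p. dig d (Suc m) p a) [1..<Suc m] \<and>
          digs d m j = map (\<lambda>p. dig d (Suc m) p b) [1..<Suc m] \<and>
          (\<forall>p<Suc m. p \<notin> set [1..<Suc m] \<longrightarrow> dig d (Suc m) p a = dig d (Suc m) p b)
       then ?P $$ (a, b) else 0) =
      (if a = a0 then if b = b0 then
         (if i mod d = j mod d then amp \<alpha> U (digs d m i) * cnj (amp \<alpha> U (digs d m j)) else 0) else 0 else 0)"
    if a: "a < d ^ Suc m" and b: "b < d ^ Suc m" for a b
  proof -
    have pa: "?s $ a = (if a div d ^ m = (a mod d ^ m) mod d then amp \<alpha> U (digs d m (a mod d ^ m)) else 0)"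
      by (rule psi_idx[OF d m a])
    have pb: "?s $ b = (if b div d ^ m = (b mod d ^ m) mod d then amp \<alpha> U (digs d m (b mod d ^ m)) else 0)"
      by (rule psi_idx[OF d m b])
    have Pab: "?P $$ (a, b) = ?s $ a * cnj (?s $ b)" using a b by (simp add: proj_idx)
    have ea: "a = a0" if "a mod d ^ m = i" "a div d ^ m = i mod d"
      using that div_mult_mod_eq[of a "d ^ m"] unfolding a0_def by simp
    have eb: "b = b0" if "b mod d ^ m = j" "b div d ^ m = j mod d"
      using that div_mult_mod_eq[of b "d ^ m"] unfolding b0_def by simp
    show ?thesis
    proof (cases "a = a0 \<and> b = b0")
      case True
      then show ?thesis
        unfolding C1[OF a i] C1[OF b j] C3[OF a b] Pab pa pb using a0d b0d by simp
    next
      case False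
      have "(if a mod d ^ m = i \<and> b mod d ^ m = j \<and> a div d ^ m = b div d ^ m then ?s $ a * cnj (?s $ b) else 0) = 0"
      proof (cases "a mod d ^ m = i \<and> b mod d ^ m = j \<and> a div d ^ m = b div d ^ m")
        case c: True
        show ?thesis
        proof (cases "a div d ^ m = i mod d \<and> b div d ^ m = j mod d")
          case True
          then show ?thesis using ea eb c False by blast
        next
          case f: False
          then have "?s $ a = 0 \<or> ?s $ b = 0" unfolding pa pb using c by auto
          then show ?thesis by auto
        qed
      next
        case False
        then show ?thesis by (rule if_not_P)
      qed
      then show ?thesis unfolding C1[OF a i] C1[OF b j] C3[OF a b] Pab using False by simp
    qed
  qed
  have "reduced d (Suc m) [1..<Suc m] ?P $$ (i, j) = (\<Sum>a<d ^ Suc m. \<Sum>b<d ^ Suc m.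
       if digs d m i = map (\<lambda>p. dig d (Suc m) p a) [1..<Suc m] \<and>
          digs d m j = map (\<lambda>p. dig d (Suc m) p b) [1..<Suc m] \<and>
          (\<forall>p<Suc m. p \<notin> set [1..<Suc m] \<longrightarrow> dig d (Suc m) p a = dig d (Suc m) p b)
       then ?P $$ (a, b) else 0)"
    using i j unfolding reduced_def by (simp del: upt_Suc)
  also have "\<dots> = (\<Sum>a<d ^ Suc m. \<Sum>b<d ^ Suc m. (if a = a0 then if b = b0 then
         (if i mod d = j mod d then amp \<alpha> U (digs d m i) * cnj (amp \<alpha> U (digs d m j)) else 0) else 0 else 0))"
    apply (rule sum.cong[OF refl])
    apply (rule sum.cong[OF refl])
    apply (rule termeq)
    by auto
  also have "\<dots> = (if i mod d = j mod d then amp \<alpha> U (digs d m i) * cnj (amp \<alpha> U (digs d m j)) else 0)"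
    by (rule dd[OF a0 b0])
  finally show ?thesis by (simp add: amp_digs[OF d m])
qed



lemma dd1: assumes "i < (N::nat)" shows "(\<Sum>q<N. \<Sum>r<(M::nat). if q = i then f r else 0) = (\<Sum>r<M. (f r::'a::comm_monoid_add))"
proof -
  have "(\<Sum>r<M. if q = i then f r else 0) = (if q = i then (\<Sum>r<M. f r) else 0)" for q
    by (cases "q = i") simp_all
  then show ?thesis using assms by (simp add: sum.delta)
qed

lemma sum_mod_qdist: assumes d: "d > 0" and m: "m \<ge> 1" and i: "i < d"
  shows "(\<Sum>a<d ^ Suc m. if a mod d = i then (cmod (psi d m \<alpha> U $ a))\<^sup>2 else 0) = qdist d m \<alpha> U i"
proof -
  let ?g = "\<lambda>a. if a mod d = i then (cmod (psi d m \<alpha> U $ a))\<^sup>2 else 0"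
  have dvd: "d dvd d ^ m" using m by (simp add: dvd_power)
  have "(\<Sum>a<d ^ Suc m. ?g a) = (\<Sum>q<d. \<Sum>r<d ^ m. ?g (q * d ^ m + r))"
    using sum_split_mult[of ?g d "d ^ m"] by simp
  also have "\<dots> = (\<Sum>q<d. \<Sum>r<d ^ m. if q = i then (if r mod d = i then (cmod (phi d m \<alpha> U i (r div d)))\<^sup>2 else 0) else 0)"
  proof (intro sum.cong refl)
    fix q r assume q: "q \<in> {..<d}" and r: "r \<in> {..<d ^ m}"
    have lt: "q * d ^ m + r < d ^ Suc m" using q r by (intro lt_pow_suc) auto
    have e1: "(q * d ^ m + r) div d ^ m = q" "(q * d ^ m + r) mod d ^ m = r" using r d by auto
    have "d ^ m = d ^ (m - 1) * d" using m power_minus_mult[of m d] by simp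
    then have "q * d ^ m + r = r + (q * d ^ (m - 1)) * d" by simp
    then have e2: "(q * d ^ m + r) mod d = r mod d" by (simp only: mod_mult_self1)
    show "?g (q * d ^ m + r) = (if q = i then (if r mod d = i then (cmod (phi d m \<alpha> U i (r div d)))\<^sup>2 else 0) else 0)"
      unfolding psi_idx[OF d m lt] e1 e2 amp_digs[OF d m] by auto
  qed
  also have "\<dots> = (\<Sum>r<d ^ m. if r mod d = i then (cmod (phi d m \<alpha> U i (r div d)))\<^sup>2 else 0)"
    by (rule dd1[OF i])
  also have "\<dots> = (\<Sum>k<d ^ (m - 1). \<Sum>x<d. if (k * d + x) mod d = i then (cmod (phi d m \<alpha> U i ((k * d + x) div d)))\<^sup>2 else 0)"
  proof -
    have "d ^ m = d ^ (m - 1) * d" using m power_minus_mult[of m d] by simp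
    then show ?thesis using sum_split_mult[of "\<lambda>r. if r mod d = i then (cmod (phi d m \<alpha> U i (r div d)))\<^sup>2 else 0" "d ^ (m - 1)" d]
      by simp
  qed
  also have "\<dots> = (\<Sum>k<d ^ (m - 1). \<Sum>x<d. if x = i then (cmod (phi d m \<alpha> U i k))\<^sup>2 else 0)"
    by (intro sum.cong refl) (use d in simp)
  also have "\<dots> = (\<Sum>k<d ^ (m - 1). (cmod (phi d m \<alpha> U i k))\<^sup>2)"
    using i by (simp add: sum.delta)
  finally show ?thesis using qdist_eq[OF d m] by simp
qed



lemma red_m: assumes d: "d > 0" and m: "m \<ge> 1" and i: "i < d" and j: "j < d"
  shows "reduced d (Suc m) [m] (proj (psi d m \<alpha> U)) $$ (i, j) =
     (if i = j then complex_of_real (qdist d m \<alpha> U i) else 0)"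
proof -
  let ?P = "proj (psi d m \<alpha> U)"
  let ?s = "psi d m \<alpha> U"
  have L: "length [m] = 1" by simp
  have D1: "(digs d 1 k = map (\<lambda>p. dig d (Suc m) p a) [m]) = (a mod d = k)" if "k < d" for a k
  proof -
    have "digs d 1 k = [k]" using that by (simp add: digs_def dig_def)
    moreover have "dig d (Suc m) m a = a mod d" by (simp add: dig_def)
    ultimately show ?thesis by auto
  qed
  have D3: "(\<forall>p<Suc m. p \<notin> set [m] \<longrightarrow> dig d (Suc m) p a = dig d (Suc m) p b)
      = (a div d = b div d)" if a: "a < d ^ Suc m" and b: "b < d ^ Suc m" for a b
  proof -
    have dd: "dig d (Suc m) p x = dig d m p (x div d)" if "p < m" for p x
      using arg_cong[OF digs_snoc[OF d, of m x], of "\<lambda>l. l ! p"] that by (simp add: nth_append)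
    have "(\<forall>p<Suc m. p \<notin> set [m] \<longrightarrow> dig d (Suc m) p a = dig d (Suc m) p b)
        = (\<forall>p<m. dig d m p (a div d) = dig d m p (b div d))"
      using dd by (auto simp: less_Suc_eq)
    also have "\<dots> = (digs d m (a div d) = digs d m (b div d))"
      by (simp add: list_eq_iff_nth_eq)
    also have "\<dots> = (a div d = b div d)"
    proof
      assume "digs d m (a div d) = digs d m (b div d)"
      moreover have "a div d < d ^ m" "b div d < d ^ m" using a b d
        by (auto simp: div_less_iff_less_mult mult.commute)
      ultimately show "a div d = b div d" using digs_inj[OF d] by blast
    qed simp
    finally show ?thesis .
  qed
  have Qdig: "a div d ^ m = a div d div d ^ (m - 1)" for a
  proof -
    have "d ^ m = d * d ^ (m - 1)" using m by (cases m) auto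
    then show ?thesis by (simp add: div_mult2_eq)
  qed
  have mm: "(a mod d ^ m) mod d = a mod d" for a
    using m by (simp add: mod_mod_cancel dvd_power)
  have termeq: "(if digs d 1 i = map (\<lambda>p. dig d (Suc m) p a) [m] \<and>
          digs d 1 j = map (\<lambda>p. dig d (Suc m) p b) [m] \<and>
          (\<forall>p<Suc m. p \<notin> set [m] \<longrightarrow> dig d (Suc m) p a = dig d (Suc m) p b)
       then ?P $$ (a, b) else 0) =
      (if a = b then (if a mod d = i \<and> i = j then complex_of_real ((cmod (?s $ a))\<^sup>2) else 0) else 0)"
    if a: "a < d ^ Suc m" and b: "b < d ^ Suc m" for a b
  proof -
    have Pab: "?P $$ (a, b) = ?s $ a * cnj (?s $ b)" using a b by (simp add: proj_idx)
    have pa: "?s $ a \<noteq> 0 \<Longrightarrow> a div d ^ m = a mod d"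
      using psi_idx[OF d m a] mm by (auto split: if_splits)
    have pb: "?s $ b \<noteq> 0 \<Longrightarrow> b div d ^ m = b mod d"
      using psi_idx[OF d m b] mm by (auto split: if_splits)
    show ?thesis
    proof (cases "a mod d = i \<and> b mod d = j \<and> a div d = b div d")
      case c: True
      show ?thesis
      proof (cases "i = j")
        case True
        then have "a = b" using c by (metis div_mult_mod_eq)
        then show ?thesis unfolding D1[OF i] D1[OF j] D3[OF a b] Pab using c True
          by (simp del: of_real_power add: complex_norm_square)
      next
        case False
        have "?s $ a = 0 \<or> ?s $ b = 0"
        proof (rule ccontr)
          assume "\<not> (?s $ a = 0 \<or> ?s $ b = 0)"
          then have "a div d ^ m = i" "b div d ^ m = j" using pa pb c by auto
          then show False using c False Qdig by metis
        qed
        then show ?thesis unfolding D1[OF i] D1[OF j] D3[OF a b] Pab using c False by auto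
      qed
    next
      case False
      then have "\<not> (a = b \<and> a mod d = i \<and> i = j)" by auto
      then have r: "(if a = b then (if a mod d = i \<and> i = j then complex_of_real ((cmod (?s $ a))\<^sup>2) else 0) else 0) = 0"
        by auto
      show ?thesis unfolding D1[OF i] D1[OF j] D3[OF a b] r using False by (rule if_not_P)
    qed
  qed
  have "reduced d (Suc m) [m] ?P $$ (i, j) = (\<Sum>a<d ^ Suc m. \<Sum>b<d ^ Suc m.
       if digs d 1 i = map (\<lambda>p. dig d (Suc m) p a) [m] \<and>
          digs d 1 j = map (\<lambda>p. dig d (Suc m) p b) [m] \<and>
          (\<forall>p<Suc m. p \<notin> set [m] \<longrightarrow> dig d (Suc m) p a = dig d (Suc m) p b)
       then ?P $$ (a, b) else 0)"
    using i j unfolding reduced_def L power_one_right by (simp only: index_mat(1) prod.simps)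
  also have "\<dots> = (\<Sum>a<d ^ Suc m. \<Sum>b<d ^ Suc m.
      (if a = b then (if a mod d = i \<and> i = j then complex_of_real ((cmod (?s $ a))\<^sup>2) else 0) else 0))"
    apply (rule sum.cong[OF refl])
    apply (rule sum.cong[OF refl])
    apply (rule termeq)
    by auto
  also have "\<dots> = (\<Sum>a<d ^ Suc m. (if a mod d = i \<and> i = j then complex_of_real ((cmod (?s $ a))\<^sup>2) else 0))"
    by (rule sum.cong[OF refl]) (simp add: sum.delta)
  also have "\<dots> = (if i = j then complex_of_real (\<Sum>a<d ^ Suc m. if a mod d = i then (cmod (?s $ a))\<^sup>2 else 0) else 0)"
    by (cases "i = j") (simp_all add: if_distrib cong: if_cong)
  also have "\<dots> = (if i = j then complex_of_real (qdist d m \<alpha> U i) else 0)"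
    by (simp only: sum_mod_qdist[OF d m i])
  finally show ?thesis .
qed



lemma sylv: fixes A B :: "complex mat"
  assumes A: "A \<in> carrier_mat n k" and B: "B \<in> carrier_mat k n" and t: "t \<noteq> 0"
  shows "det (t \<cdot>\<^sub>m 1\<^sub>m n - A * B) * t ^ k = t ^ n * det (t \<cdot>\<^sub>m 1\<^sub>m k - B * A)"
proof -
  let ?M = "four_block_mat (t \<cdot>\<^sub>m 1\<^sub>m n) A B (1\<^sub>m k)"
  let ?L1 = "four_block_mat (1\<^sub>m n) (- A) (0\<^sub>m k n) (1\<^sub>m k)"
  let ?L2 = "four_block_mat (1\<^sub>m n) (0\<^sub>m n k) (- B) (t \<cdot>\<^sub>m 1\<^sub>m k)"
  have AB: "A * B \<in> carrier_mat n n" "B * A \<in> carrier_mat k k" using A B by auto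
  have M: "?M \<in> carrier_mat (n + k) (n + k)" using A B by auto
  have L1: "?L1 \<in> carrier_mat (n + k) (n + k)" using A B by auto
  have L2: "?L2 \<in> carrier_mat (n + k) (n + k)" using A B by auto
  have e1: "?L1 * ?M = four_block_mat (t \<cdot>\<^sub>m 1\<^sub>m n - A * B) (0\<^sub>m n k) B (1\<^sub>m k)"
  proof -
    have "?L1 * ?M = four_block_mat (1\<^sub>m n * (t \<cdot>\<^sub>m 1\<^sub>m n) + (- A) * B) (1\<^sub>m n * A + (- A) * 1\<^sub>m k)
       (0\<^sub>m k n * (t \<cdot>\<^sub>m 1\<^sub>m n) + 1\<^sub>m k * B) (0\<^sub>m k n * A + 1\<^sub>m k * 1\<^sub>m k)"
      by (rule mult_four_block_mat) (use A B in auto)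
    also have "\<dots> = four_block_mat (t \<cdot>\<^sub>m 1\<^sub>m n - A * B) (0\<^sub>m n k) B (1\<^sub>m k)"
    proof (rule cong_four_block_mat)
      show "1\<^sub>m n * (t \<cdot>\<^sub>m 1\<^sub>m n) + - A * B = t \<cdot>\<^sub>m 1\<^sub>m n - A * B"
        using A B by (intro eq_matI) auto
      show "1\<^sub>m n * A + - A * 1\<^sub>m k = 0\<^sub>m n k"
        using A B by (intro eq_matI) auto
      show "0\<^sub>m k n * (t \<cdot>\<^sub>m 1\<^sub>m n) + 1\<^sub>m k * B = B"
        using A B by (intro eq_matI) auto
      show "0\<^sub>m k n * A + 1\<^sub>m k * 1\<^sub>m k = 1\<^sub>m k"
        using A B by (intro eq_matI) auto
    qed
    finally show ?thesis .
  qed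
  have e2: "?L2 * ?M = four_block_mat (t \<cdot>\<^sub>m 1\<^sub>m n) A (0\<^sub>m k n) (t \<cdot>\<^sub>m 1\<^sub>m k - B * A)"
  proof -
    have "?L2 * ?M = four_block_mat (1\<^sub>m n * (t \<cdot>\<^sub>m 1\<^sub>m n) + 0\<^sub>m n k * B) (1\<^sub>m n * A + 0\<^sub>m n k * 1\<^sub>m k)
       ((- B) * (t \<cdot>\<^sub>m 1\<^sub>m n) + (t \<cdot>\<^sub>m 1\<^sub>m k) * B) ((- B) * A + (t \<cdot>\<^sub>m 1\<^sub>m k) * 1\<^sub>m k)"
      by (rule mult_four_block_mat) (use A B in auto)
    also have "\<dots> = four_block_mat (t \<cdot>\<^sub>m 1\<^sub>m n) A (0\<^sub>m k n) (t \<cdot>\<^sub>m 1\<^sub>m k - B * A)"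
    proof (rule cong_four_block_mat)
      show "1\<^sub>m n * (t \<cdot>\<^sub>m 1\<^sub>m n) + 0\<^sub>m n k * B = t \<cdot>\<^sub>m 1\<^sub>m n"
        using A B by (intro eq_matI) auto
      show "1\<^sub>m n * A + 0\<^sub>m n k * 1\<^sub>m k = A"
        using A B by (intro eq_matI) auto
      show "(- B) * (t \<cdot>\<^sub>m 1\<^sub>m n) + (t \<cdot>\<^sub>m 1\<^sub>m k) * B = 0\<^sub>m k n"
        using A B by (intro eq_matI) auto
      show "(- B) * A + (t \<cdot>\<^sub>m 1\<^sub>m k) * 1\<^sub>m k = t \<cdot>\<^sub>m 1\<^sub>m k - B * A"
        using A B by (intro eq_matI) auto
    qed
    finally show ?thesis .
  qed
  have dL1: "det ?L1 = 1"
    by (subst det_four_block_mat_lower_left_zero[of _ n _ k]) (use A in auto)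
  have dL2: "det ?L2 = t ^ k"
    by (subst det_four_block_mat_upper_right_zero[of _ n _ k]) (use B in auto)
  have d1: "det (?L1 * ?M) = det (t \<cdot>\<^sub>m 1\<^sub>m n - A * B)"
    unfolding e1 by (subst det_four_block_mat_upper_right_zero[of _ n _ k]) (use A B in auto)
  have d2: "det (?L2 * ?M) = t ^ n * det (t \<cdot>\<^sub>m 1\<^sub>m k - B * A)"
    unfolding e2 by (subst det_four_block_mat_lower_left_zero[of _ n _ k]) (use A B in auto)
  have "det ?M = det (t \<cdot>\<^sub>m 1\<^sub>m n - A * B)" using d1 det_mult[OF L1 M] dL1 by simp
  moreover have "t ^ k * det ?M = t ^ n * det (t \<cdot>\<^sub>m 1\<^sub>m k - B * A)" using d2 det_mult[OF L2 M] dL2 by simp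
  ultimately show ?thesis by (simp add: mult.commute)
qed

lemma cp_eval: fixes X :: "complex mat" assumes X: "X \<in> carrier_mat n n"
  shows "poly (char_poly X) t = det (t \<cdot>\<^sub>m 1\<^sub>m n - X)"
proof -
  have "- char_matrix X t = t \<cdot>\<^sub>m 1\<^sub>m n - X"
    using X unfolding char_matrix_def by (intro eq_matI) auto
  then show ?thesis using char_poly_matrix[OF X] by simp
qed

lemma poly_eq_nonzero: fixes p q :: "complex poly"
  assumes "\<And>t. t \<noteq> 0 \<Longrightarrow> poly p t = poly q t" shows "p = q"
proof (rule ccontr)
  assume "p \<noteq> q"
  then have "p - q \<noteq> 0" by simp
  then have fin: "finite {t. poly (p - q) t = 0}" by (rule poly_roots_finite)
  have "UNIV - {0} \<subseteq> {t. poly (p - q) t = 0}" using assms by auto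
  then have "finite (UNIV - {0::complex})" using finite_subset fin by blast
  then have "finite (UNIV :: complex set)" by simp
  then show False using infinite_UNIV_char_0 by blast
qed

lemma cp_rel: fixes A B :: "complex mat"
  assumes A: "A \<in> carrier_mat n k" and B: "B \<in> carrier_mat k n" and kn: "k \<le> n"
  shows "char_poly (A * B) = [:0, 1:] ^ (n - k) * char_poly (B * A)"
proof -
  have AB: "A * B \<in> carrier_mat n n" "B * A \<in> carrier_mat k k" using A B by auto
  have "char_poly (A * B) * [:0, 1:] ^ k = ([:0, 1:] ^ (n - k) * char_poly (B * A)) * [:0, 1:] ^ k"
  proof (rule poly_eq_nonzero)
    fix t :: complex assume t: "t \<noteq> 0"
    have "t ^ n = t ^ (n - k) * t ^ k" using kn by (simp add: power_add[symmetric])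
    then show "poly (char_poly (A * B) * [:0, 1:] ^ k) t = poly ([:0, 1:] ^ (n - k) * char_poly (B * A) * [:0, 1:] ^ k) t"
      using sylv[OF A B t] cp_eval[OF AB(1)] cp_eval[OF AB(2)] by (simp add: ac_simps)
  qed
  moreover have "([:0, 1:] :: complex poly) ^ k \<noteq> 0" by simp
  ultimately show ?thesis by simp
qed

lemma ent_eq: fixes p q :: "complex poly"
  assumes pq: "p = [:0, 1:] ^ k * q" and q: "q \<noteq> 0"
  shows "(\<Sum>e\<in>{e. poly p e = 0}. real (order e p) * eta d (Re e)) =
         (\<Sum>e\<in>{e. poly q e = 0}. real (order e q) * eta d (Re e))"
proof -
  have p0: "p \<noteq> 0" using pq q by simp
  let ?S = "{e. poly p e = 0} \<union> {e. poly q e = 0}"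
  have fS: "finite ?S" using poly_roots_finite[OF p0] poly_roots_finite[OF q] by simp
  have "(\<Sum>e\<in>{e. poly p e = 0}. real (order e p) * eta d (Re e)) = (\<Sum>e\<in>?S. real (order e p) * eta d (Re e))"
    by (rule sum.mono_neutral_left[OF fS]) (auto simp: order_root)
  also have "\<dots> = (\<Sum>e\<in>?S. real (order e q) * eta d (Re e))"
  proof (rule sum.cong[OF refl])
    fix e assume "e \<in> ?S"
    show "real (order e p) * eta d (Re e) = real (order e q) * eta d (Re e)"
    proof (cases "e = 0")
      case True then show ?thesis by (simp add: eta_def)
    next
      case False
      have "order e p = order e ([:0, 1:] ^ k) + order e q"
        unfolding pq by (rule order_mult) (use p0 pq in simp)
      moreover have "order e ([:0, 1:] ^ k) = 0"
        using False order_root[of "[:0, 1:] ^ k" e] by simp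
      ultimately show ?thesis by simp
    qed
  qed
  also have "\<dots> = (\<Sum>e\<in>{e. poly q e = 0}. real (order e q) * eta d (Re e))"
    by (rule sum.mono_neutral_right[OF fS]) (auto simp: order_root)
  finally show ?thesis .
qed



definition psiv :: "nat \<Rightarrow> nat \<Rightarrow> (nat \<Rightarrow> complex) \<Rightarrow> (nat \<Rightarrow> nat \<Rightarrow> nat \<Rightarrow> complex) \<Rightarrow> nat \<Rightarrow> complex vec" where
  "psiv d m \<alpha> U x = (if qdist d m \<alpha> U x = 0 then unit_vec (d ^ (m - 1)) 0
     else vec (d ^ (m - 1)) (\<lambda>k. phi d m \<alpha> U x k / complex_of_real (sqrt (qdist d m \<alpha> U x))))"

lemma psiv_dim[simp]: "dim_vec (psiv d m \<alpha> U x) = d ^ (m - 1)"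
  by (simp add: psiv_def)

lemma qdist_nonneg: assumes "d > 0" "m \<ge> 1" shows "qdist d m \<alpha> U x \<ge> 0"
  unfolding qdist_eq[OF assms] by (simp add: sum_nonneg)

lemma psiv_norm: assumes d: "d > 0" and m: "m \<ge> 1"
  shows "(\<Sum>i<d ^ (m - 1). (cmod (psiv d m \<alpha> U x $ i))\<^sup>2) = 1"
proof (cases "qdist d m \<alpha> U x = 0")
  case True
  have "(\<Sum>i<d ^ (m - 1). (cmod (psiv d m \<alpha> U x $ i))\<^sup>2) = (\<Sum>i<d ^ (m - 1). if i = 0 then 1 else 0)"
    by (rule sum.cong[OF refl]) (simp add: psiv_def True unit_vec_def)
  also have "\<dots> = 1" using d by (simp add: sum.delta)
  finally show ?thesis .
next
  case False
  let ?q = "qdist d m \<alpha> U x"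
  have qp: "?q > 0" using False qdist_nonneg[OF d m, of \<alpha> U x] by simp
  have "(\<Sum>i<d ^ (m - 1). (cmod (psiv d m \<alpha> U x $ i))\<^sup>2) = (\<Sum>i<d ^ (m - 1). (cmod (phi d m \<alpha> U x i))\<^sup>2 / ?q)"
  proof (rule sum.cong[OF refl])
    fix i assume "i \<in> {..<d ^ (m - 1)}"
    then show "(cmod (psiv d m \<alpha> U x $ i))\<^sup>2 = (cmod (phi d m \<alpha> U x i))\<^sup>2 / ?q"
      using qp False by (simp add: psiv_def norm_divide power_divide)
  qed
  also have "\<dots> = ?q / ?q" unfolding sum_divide_distrib[symmetric] qdist_eq[OF d m] ..
  finally show ?thesis using qp by simp
qed

lemma psiv_outer: assumes d: "d > 0" and m: "m \<ge> 1" and a: "a < d ^ (m - 1)" and b: "b < d ^ (m - 1)"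
  shows "complex_of_real (qdist d m \<alpha> U x) * (psiv d m \<alpha> U x $ a * cnj (psiv d m \<alpha> U x $ b))
     = phi d m \<alpha> U x a * cnj (phi d m \<alpha> U x b)"
proof (cases "qdist d m \<alpha> U x = 0")
  case True
  then have "(\<Sum>k<d ^ (m - 1). (cmod (phi d m \<alpha> U x k))\<^sup>2) = 0" using qdist_eq[OF d m] by simp
  then have "\<forall>k\<in>{..<d ^ (m - 1)}. (cmod (phi d m \<alpha> U x k))\<^sup>2 = 0"
    by (subst sum_nonneg_eq_0_iff[symmetric]) auto
  then have "phi d m \<alpha> U x a = 0" using a by simp
  then show ?thesis using True by simp
next
  case False
  let ?q = "qdist d m \<alpha> U x"
  have qp: "?q > 0" using False qdist_nonneg[OF d m, of \<alpha> U x] by simp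
  have s: "complex_of_real (sqrt ?q) * complex_of_real (sqrt ?q) = complex_of_real ?q"
    using qp by (simp flip: of_real_mult)
  have nz: "complex_of_real (sqrt ?q) \<noteq> 0" using qp by simp
  show ?thesis using a b False nz s
    by (simp add: psiv_def field_simps)
qed

lemma kron_entry: assumes d: "d > 0" and m: "m \<ge> 1" and i: "i < d ^ m" and j: "j < d ^ m"
  shows "kron (proj (psiv d m \<alpha> U x)) (proj (unit_vec d x)) $$ (i, j) =
     psiv d m \<alpha> U x $ (i div d) * cnj (psiv d m \<alpha> U x $ (j div d)) * (if i mod d = x \<and> j mod d = x then 1 else 0)"
proof -
  have e: "d ^ m = d ^ (m - 1) * d" using m power_minus_mult[of m d] by simp
  have i': "i div d < d ^ (m - 1)" "j div d < d ^ (m - 1)" using i j e d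
    by (auto simp: div_less_iff_less_mult)
  have "i < d ^ (m - 1) * d" "j < d ^ (m - 1) * d" using i j e by auto
  then show ?thesis using i' d
    by (simp add: kron_def proj_def unit_vec_def)
qed



definition Amat where "Amat d m \<alpha> U = mat (d ^ m) d (\<lambda>(i, x). if i mod d = x then
   complex_of_real (qdist d m \<alpha> U x) * psiv d m \<alpha> U x $ (i div d) else 0)"
definition Bmat where "Bmat d m \<alpha> U = mat d (d ^ m) (\<lambda>(x, j). if j mod d = x then
   cnj (psiv d m \<alpha> U x $ (j div d)) else 0)"

definition Fent where "Fent d m \<alpha> U i j = (if i mod d = j mod d then
   complex_of_real (qdist d m \<alpha> U (i mod d)) * (psiv d m \<alpha> U (i mod d) $ (i div d) * cnj (psiv d m \<alpha> U (i mod d) $ (j div d))) else 0)"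

lemma Mform_entry: assumes d: "d > 0" and m: "m \<ge> 1" and i: "i < d ^ m" and j: "j < d ^ m"
  shows "(\<Sum>x<d. complex_of_real (qdist d m \<alpha> U x) * kron (proj (psiv d m \<alpha> U x)) (proj (unit_vec d x)) $$ (i, j))
    = Fent d m \<alpha> U i j"
proof -
  have "(\<Sum>x<d. complex_of_real (qdist d m \<alpha> U x) * kron (proj (psiv d m \<alpha> U x)) (proj (unit_vec d x)) $$ (i, j))
    = (\<Sum>x<d. if x = i mod d then Fent d m \<alpha> U i j else 0)"
    by (rule sum.cong[OF refl]) (auto simp: kron_entry[OF d m i j] Fent_def)
  also have "\<dots> = Fent d m \<alpha> U i j" using d by (simp add: sum.delta)
  finally show ?thesis .
qed

lemma AB_entry: assumes d: "d > 0" and m: "m \<ge> 1" and i: "i < d ^ m" and j: "j < d ^ m"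
  shows "(Amat d m \<alpha> U * Bmat d m \<alpha> U) $$ (i, j) = Fent d m \<alpha> U i j"
proof -
  have "(Amat d m \<alpha> U * Bmat d m \<alpha> U) $$ (i, j) = (\<Sum>x<d. Amat d m \<alpha> U $$ (i, x) * Bmat d m \<alpha> U $$ (x, j))"
    using i j by (simp add: Amat_def Bmat_def scalar_prod_def atLeast0LessThan)
  also have "\<dots> = (\<Sum>x<d. if x = i mod d then Fent d m \<alpha> U i j else 0)"
    by (rule sum.cong[OF refl]) (use i j in \<open>auto simp: Amat_def Bmat_def Fent_def\<close>)
  also have "\<dots> = Fent d m \<alpha> U i j" using d by (simp add: sum.delta)
  finally show ?thesis .
qed

lemma BA_entry: assumes d: "d > 0" and m: "m \<ge> 1" and x: "x < d" and y: "y < d"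
  shows "(Bmat d m \<alpha> U * Amat d m \<alpha> U) $$ (x, y) = (if x = y then complex_of_real (qdist d m \<alpha> U x) else 0)"
proof -
  let ?A = "Amat d m \<alpha> U" and ?B = "Bmat d m \<alpha> U" and ?q = "\<lambda>x. complex_of_real (qdist d m \<alpha> U x)"
  let ?p = "psiv d m \<alpha> U"
  have e: "d ^ m = d ^ (m - 1) * d" using m power_minus_mult[of m d] by simp
  have "(?B * ?A) $$ (x, y) = (\<Sum>i<d ^ m. ?B $$ (x, i) * ?A $$ (i, y))"
    using x y by (simp add: Amat_def Bmat_def scalar_prod_def atLeast0LessThan)
  also have "\<dots> = (\<Sum>k<d ^ (m - 1). \<Sum>z<d. ?B $$ (x, k * d + z) * ?A $$ (k * d + z, y))"
    unfolding e by (rule sum_split_mult)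
  also have "\<dots> = (\<Sum>k<d ^ (m - 1). \<Sum>z<d. if z = x then (if x = y then ?q x * complex_of_real ((cmod (?p x $ k))\<^sup>2) else 0) else 0)"
  proof (intro sum.cong refl)
    fix k z assume k: "k \<in> {..<d ^ (m - 1)}" and z: "z \<in> {..<d}"
    have "k * d + z < (k + 1) * d" using z by simp
    also have "\<dots> \<le> d ^ (m - 1) * d" using k by (intro mult_right_mono) auto
    finally have lt: "k * d + z < d ^ m" unfolding e .
    have cn: "cnj w * w = (complex_of_real (cmod w))\<^sup>2" for w
      using complex_norm_square[of w] by (simp add: mult.commute)
    have dm: "(k * d + z) mod d = z" "(k * d + z) div d = k" using z d by auto
    show "?B $$ (x, k * d + z) * ?A $$ (k * d + z, y) =
      (if z = x then (if x = y then ?q x * complex_of_real ((cmod (?p x $ k))\<^sup>2) else 0) else 0)"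
      using lt x y dm by (auto simp: Amat_def Bmat_def cn)
  qed
  also have "\<dots> = (\<Sum>k<d ^ (m - 1). if x = y then ?q x * complex_of_real ((cmod (?p x $ k))\<^sup>2) else 0)"
    using x by (simp add: sum.delta)
  also have "\<dots> = (if x = y then ?q x * complex_of_real (\<Sum>k<d ^ (m - 1). (cmod (?p x $ k))\<^sup>2) else 0)"
    by (simp add: sum_distrib_left)
  also have "\<dots> = (if x = y then ?q x else 0)" using psiv_norm[OF d m] by simp
  finally show ?thesis .
qed



theorem theorem1:
  fixes d m :: nat and \<alpha> :: "nat \<Rightarrow> complex" and U :: "nat \<Rightarrow> nat \<Rightarrow> nat \<Rightarrow> complex"
  assumes "d \<ge> 2" and "m \<ge> 1"
    and "(\<Sum>x<d. (cmod (\<alpha> x))\<^sup>2) = 1"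
    and "\<forall>i\<in>{2..m}. unitary_fn d (U i)"
  shows "let \<rho> = reduced d (Suc m) [1..<Suc m] (proj (psi d m \<alpha> U)) in
     (\<exists>\<psi> :: nat \<Rightarrow> complex vec.
        (\<forall>x<d. dim_vec (\<psi> x) = d ^ (m - 1) \<and> (\<Sum>i<d ^ (m - 1). (cmod (\<psi> x $ i))\<^sup>2) = 1) \<and>
        \<rho> = mat (d ^ m) (d ^ m) (\<lambda>(i, j). \<Sum>x<d.
               complex_of_real (qdist d m \<alpha> U x) * kron (proj (\<psi> x)) (proj (unit_vec d x)) $$ (i, j))) \<and>
     vn_entropy d \<rho> = vn_entropy d (reduced d (Suc m) [m] (proj (psi d m \<alpha> U)))"
proof -
  have d: "d > 0" using assms(1) by simp
  have m: "m \<ge> 1" by (rule assms(2))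
  let ?R = "reduced d (Suc m) [1..<Suc m] (proj (psi d m \<alpha> U))"
  let ?Rm = "reduced d (Suc m) [m] (proj (psi d m \<alpha> U))"
  let ?M = "mat (d ^ m) (d ^ m) (\<lambda>(i, j). \<Sum>x<d.
               complex_of_real (qdist d m \<alpha> U x) * kron (proj (psiv d m \<alpha> U x)) (proj (unit_vec d x)) $$ (i, j))"
  let ?A = "Amat d m \<alpha> U" and ?B = "Bmat d m \<alpha> U"
  have A: "?A \<in> carrier_mat (d ^ m) d" by (simp add: Amat_def)
  have B: "?B \<in> carrier_mat d (d ^ m)" by (simp add: Bmat_def)
  have RM: "?R = ?M"
  proof (rule eq_matI)
    fix i j assume "i < dim_row ?M" "j < dim_col ?M"
    then have i: "i < d ^ m" and j: "j < d ^ m" by auto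
    have "?M $$ (i, j) = Fent d m \<alpha> U i j" using i j Mform_entry[OF d m i j] by simp
    also have "\<dots> = ?R $$ (i, j)"
    proof -
      have e: "d ^ m = d ^ (m - 1) * d" using m power_minus_mult[of m d] by simp
      have i': "i div d < d ^ (m - 1)" "j div d < d ^ (m - 1)" using i j e d
        by (auto simp: div_less_iff_less_mult)
      show ?thesis unfolding red1[OF d m i j] Fent_def using psiv_outer[OF d m i'] by simp
    qed
    finally show "?R $$ (i, j) = ?M $$ (i, j)" ..
  qed (use m in \<open>simp_all add: reduced_def\<close>)
  have MAB: "?M = ?A * ?B"
  proof (rule eq_matI)
    fix i j assume "i < dim_row (?A * ?B)" "j < dim_col (?A * ?B)"
    then have i: "i < d ^ m" and j: "j < d ^ m" using A B by auto
    show "?M $$ (i, j) = (?A * ?B) $$ (i, j)"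
      using i j Mform_entry[OF d m i j] AB_entry[OF d m i j] by simp
  qed (use A B in auto)
  have RmBA: "?Rm = ?B * ?A"
  proof (rule eq_matI)
    fix i j assume "i < dim_row (?B * ?A)" "j < dim_col (?B * ?A)"
    then have i: "i < d" and j: "j < d" using A B by auto
    show "?Rm $$ (i, j) = (?B * ?A) $$ (i, j)"
      unfolding red_m[OF d m i j] BA_entry[OF d m i j] ..
  qed (use A B in \<open>auto simp: reduced_def\<close>)
  have dle: "d \<le> d ^ m" using d m by (simp add: self_le_power)
  have cp: "char_poly (?A * ?B) = [:0, 1:] ^ (d ^ m - d) * char_poly (?B * ?A)"
    by (rule cp_rel[OF A B dle])
  have BA: "?B * ?A \<in> carrier_mat d d" using A B by auto
  have nz: "char_poly (?B * ?A) \<noteq> 0"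
    using degree_monic_char_poly[OF BA] by auto
  have ent: "vn_entropy d ?R = vn_entropy d ?Rm"
    unfolding vn_entropy_def RM MAB RmBA using ent_eq[OF cp nz] by simp
  show ?thesis
    unfolding Let_def
  proof (intro conjI exI[of _ "psiv d m \<alpha> U"] allI impI)
    fix x assume "x < d"
    show "dim_vec (psiv d m \<alpha> U x) = d ^ (m - 1)" by simp
    show "(\<Sum>i<d ^ (m - 1). (cmod (psiv d m \<alpha> U x $ i))\<^sup>2) = 1" by (rule psiv_norm[OF d m])
  next
    show "?R = ?M" by (rule RM)
  next
    show "vn_entropy d ?R = vn_entropy d ?Rm" by (rule ent)
  qed
qed

end
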